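(* If $S$ is an idempotent semiring satisfying $x\approx xyx+x+xyx$ (equivalently, $\mathcal{D}^{\bullet}$ is the least distributive lattice congruence on $S$), then the multiplicative reduct $(S,\cdot)$ is a normal band, i.e. $xyzx=xzyx$ for all $x,y,z\in S$.
   Context: An idempotent semiring is an algebra $(S,+,\cdot)$ with $(S,+)$, $(S,\cdot)$ bands and both distributive laws; addition not assumed commutative. $a\,\mathcal{D}^{\bullet}\,b$ iff $aba=a$ and $bab=b$. A distributive lattice congruence is a congruence $\rho$ with $S/\rho$ satisfying $x+y\approx y+x$, $xy\approx yx$, $x+xy\approx x$. *)

theory Defs
  imports Main
begin

definition band :: "('a \<Rightarrow> 'a \<Rightarrow> 'a) \<Rightarrow> bool" where
  "band f \<longleftrightarrow> (\<forall>x y z. f (f x y) z = f x (f y z)) \<and> (\<forall>x. f x x = x)"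

text \<open>Idempotent semiring: both reducts are bands, both distributive laws;
addition is not assumed commutative.\<close>
definition idempotent_semiring :: "('a \<Rightarrow> 'a \<Rightarrow> 'a) \<Rightarrow> ('a \<Rightarrow> 'a \<Rightarrow> 'a) \<Rightarrow> bool" where
  "idempotent_semiring add mul \<longleftrightarrow> band add \<and> band mul \<and>
     (\<forall>x y z. mul x (add y z) = add (mul x y) (mul x z)) \<and>
     (\<forall>x y z. mul (add x y) z = add (mul x z) (mul y z))"

end

theory Submission
  imports Defs
begin

lemma comm_aux:
  fixes add :: "'a \<Rightarrow> 'a \<Rightarrow> 'a" and mul :: "'a \<Rightarrow> 'a \<Rightarrow> 'a"
  assumes mi: "\<And>x. mul x x = x"
  and dl: "\<And>x y z. mul x (add y z) = add (mul x y) (mul x z)"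
  and dr: "\<And>x y z. mul (add x y) z = add (mul x z) (mul y z)"
  and "add a (mul a b) = a" "add a (mul b a) = a" "add (mul a b) a = a" "add (mul b a) a = a"
  and "add b (mul b a) = b" "add b (mul a b) = b" "add (mul b a) b = b" "add (mul a b) b = b"
  shows "mul a b = mul b a"
  by (smt (verit) assms)

theorem theorem4p7:
  fixes add :: "'a \<Rightarrow> 'a \<Rightarrow> 'a" and mul :: "'a \<Rightarrow> 'a \<Rightarrow> 'a"
  assumes "idempotent_semiring add mul"
    and "\<forall>x y. x = add (add (mul (mul x y) x) x) (mul (mul x y) x)"
  shows "\<forall>x y z. mul (mul (mul x y) z) x = mul (mul (mul x z) y) x"
proof -
  have aa: "\<And>x y z. add (add x y) z = add x (add y z)" and ai: "\<And>x. add x x = x"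
  and ma: "\<And>x y z. mul (mul x y) z = mul x (mul y z)" and mi: "\<And>x. mul x x = x"
  and dl: "\<And>x y z. mul x (add y z) = add (mul x y) (mul x z)"
  and dr: "\<And>x y z. mul (add x y) z = add (mul x z) (mul y z)"
    using assms(1) unfolding idempotent_semiring_def band_def by auto
  have mi2: "\<And>x y. mul x (mul x y) = mul x y" using ma mi by metis
  have id: "\<And>x y. x = add (add (mul x (mul y x)) x) (mul x (mul y x))"
    using assms(2) by (simp add: ma)
  have l12: "\<And>x b. add x (mul x (mul b x)) = x \<and> add (mul x (mul b x)) x = x"
  proof -
    fix x b
    define a where "a = mul x (mul b x)"
    have h: "add (add a x) a = x" using id[of x b] unfolding a_def[symmetric] by (metis ai aa)
    have 1: "add (add (add a x) a) a = add (add a x) a" by (simp add: aa ai)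
    have 2: "add a (add (add a x) a) = add (add a x) a" by (simp add: aa[symmetric] ai)
    show "add x a = x \<and> add a x = x" using 1 2 unfolding h by simp
  qed
  have l1: "\<And>x b. add x (mul x (mul b x)) = x" using l12 by blast
  have l2: "\<And>x b. add (mul x (mul b x)) x = x" using l12 by blast
  have loc: "\<And>x a b. mul x (mul a x) = a \<Longrightarrow> mul x (mul b x) = b \<Longrightarrow>
      add a (mul a b) = a \<and> add a (mul b a) = a \<and> add (mul a b) a = a \<and> add (mul b a) a = a"
  proof -
    fix x a b assume ha: "mul x (mul a x) = a" and hb: "mul x (mul b x) = b"
    have xb: "add x b = x" using l1[of x b] hb by simp
    have bx: "add b x = x" using l2[of x b] hb by simp
    have ax: "mul a x = a" using ha by (metis ma mi)
    have xa: "mul x a = a" using ha by (metis mi2)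
    have "add a (mul a b) = mul a (add x b)" using dl ax by simp
    moreover have "add a (mul b a) = mul (add x b) a" using dr xa by simp
    moreover have "add (mul a b) a = mul a (add b x)" using dl ax by simp
    moreover have "add (mul b a) a = mul (add b x) a" using dr xa by simp
    ultimately show "add a (mul a b) = a \<and> add a (mul b a) = a \<and> add (mul a b) a = a \<and> add (mul b a) a = a"
      using xb bx ax xa by simp
  qed
  have c: "\<And>x y z. mul x (mul y (mul x (mul z x))) = mul x (mul z (mul x (mul y x)))"
  proof -
    fix x y z
    have A: "mul x (mul (mul x (mul y x)) x) = mul x (mul y x)" by (simp add: ma mi mi2)
    have B: "mul x (mul (mul x (mul z x)) x) = mul x (mul z x)" by (simp add: ma mi mi2)
    have "mul (mul x (mul y x)) (mul x (mul z x)) = mul (mul x (mul z x)) (mul x (mul y x))"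
      using comm_aux[of mul add, OF mi dl dr] loc[OF A B] loc[OF B A] by blast
    then show "mul x (mul y (mul x (mul z x))) = mul x (mul z (mul x (mul y x)))"
      by (simp add: ma mi mi2)
  qed
  have "\<And>x y z. mul x (mul y (mul z x)) = mul x (mul z (mul y x))"
    by (metis c ma mi)
  then show ?thesis using ma by metis
qed

end
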